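(* Let $n\ge 4$ be an integer not divisible by $3$. Then the prism $D_n=C_n\Box P_2$ (on $2n$ vertices) is $\mathbb{Z}_{2n}$-distance antimagic.
   Context: $C_n$ is the cycle of length $n$, $P_2$ the path with two vertices ($K_2$), and $\Box$ the Cartesian product: $V(G\Box H)=V(G)\times V(H)$, with $(x,u)\sim(y,v)$ iff ($x=y$ and $uv\in E(H)$) or ($u=v$ and $xy\in E(G)$). $\mathbb{Z}_m$ is the cyclic group of integers modulo $m$. For a graph $G$ with $N$ vertices and an Abelian group $A$ of order $N$, and a bijection $f:V(G)\to A$, the weight of $x$ is $w_f(x)=\sum_{y\in N(x)} f(y)$ computed in $A$ ($N(x)$ the open neighbourhood). $f$ is an $A$-distance antimagic labelling if all weights are pairwise distinct; $G$ is $A$-distance antimagic if it admits such a labelling. *)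

theory Defs
  imports Main
begin

definition cycle_adj :: "nat \<Rightarrow> nat \<Rightarrow> nat \<Rightarrow> bool" where
  "cycle_adj n i j \<longleftrightarrow> i < n \<and> j < n \<and> i \<noteq> j \<and> (j = (i + 1) mod n \<or> i = (j + 1) mod n)"

definition P2_adj :: "nat \<Rightarrow> nat \<Rightarrow> bool" where
  "P2_adj u v \<longleftrightarrow> u < 2 \<and> v < 2 \<and> u \<noteq> v"

definition cart_adj :: "('a \<Rightarrow> 'a \<Rightarrow> bool) \<Rightarrow> ('b \<Rightarrow> 'b \<Rightarrow> bool) \<Rightarrow> 'a \<times> 'b \<Rightarrow> 'a \<times> 'b \<Rightarrow> bool" where
  "cart_adj G H p q \<longleftrightarrow> (fst p = fst q \<and> H (snd p) (snd q)) \<or> (snd p = snd q \<and> G (fst p) (fst q))"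

definition prism_vertices :: "nat \<Rightarrow> (nat \<times> nat) set" where
  "prism_vertices n = {0..<n} \<times> {0..<2}"

definition prism_adj :: "nat \<Rightarrow> nat \<times> nat \<Rightarrow> nat \<times> nat \<Rightarrow> bool" where
  "prism_adj n = cart_adj (cycle_adj n) P2_adj"

definition nbhd :: "'v set \<Rightarrow> ('v \<Rightarrow> 'v \<Rightarrow> bool) \<Rightarrow> 'v \<Rightarrow> 'v set" where
  "nbhd V adj x = {y \<in> V. adj x y}"

(* Z_m is modelled as {0..<m} with addition modulo m; the weight computed in Z_m is
   the natural-number sum reduced mod m. *)
definition Zm_weight :: "nat \<Rightarrow> 'v set \<Rightarrow> ('v \<Rightarrow> 'v \<Rightarrow> bool) \<Rightarrow> ('v \<Rightarrow> nat) \<Rightarrow> 'v \<Rightarrow> nat" where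
  "Zm_weight m V adj f x = (\<Sum>y\<in>nbhd V adj x. f y) mod m"

definition Zm_distance_antimagic_labelling ::
  "nat \<Rightarrow> 'v set \<Rightarrow> ('v \<Rightarrow> 'v \<Rightarrow> bool) \<Rightarrow> ('v \<Rightarrow> nat) \<Rightarrow> bool" where
  "Zm_distance_antimagic_labelling m V adj f \<longleftrightarrow>
     bij_betw f V {0..<m} \<and> inj_on (Zm_weight m V adj f) V"

definition Zm_distance_antimagic :: "nat \<Rightarrow> 'v set \<Rightarrow> ('v \<Rightarrow> 'v \<Rightarrow> bool) \<Rightarrow> bool" where
  "Zm_distance_antimagic m V adj \<longleftrightarrow> (\<exists>f. Zm_distance_antimagic_labelling m V adj f)"

end

theory Submission
  imports Defs "HOL-Number_Theory.Number_Theory"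
begin

lemma succ_pred:
  fixes i n :: nat
  assumes "i < n" "n \<ge> 3"
  shows "(i+1) mod n = (if i = n - 1 then 0 else i + 1)"
    and "(i+n-1) mod n = (if i = 0 then n - 1 else i - 1)"
proof -
  show "(i+1) mod n = (if i = n - 1 then 0 else i + 1)"
    using assms by (cases "i = n - 1") auto
  show "(i+n-1) mod n = (if i = 0 then n - 1 else i - 1)"
  proof (cases "i = 0")
    case True then show ?thesis using assms by auto
  next
    case False
    then have "i+n-1 = (i-1) + n" by simp
    then have "(i+n-1) mod n = (i-1) mod n" by simp
    then show ?thesis using False assms by simp
  qed
qed

lemma cyc:
  assumes "i < n" "j < n" "n \<ge> 3"
  shows "cycle_adj n i j \<longleftrightarrow> j = (i+1) mod n \<or> j = (i+n-1) mod n"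
  using assms unfolding cycle_adj_def succ_pred[OF assms(1,3)] succ_pred[OF assms(2,3)]
  by (auto split: if_splits)

lemma nb:
  assumes "i < n" "b < 2" "n \<ge> 3"
  shows "nbhd (prism_vertices n) (prism_adj n) (i,b) =
     {((i+1) mod n, b), ((i+n-1) mod n, b), (i, 1-b)}"
proof -
  have m1: "(i+1) mod n < n" "(i+n-1) mod n < n" using assms by auto
  show ?thesis
  proof (rule Set.set_eqI)
    fix p :: "nat \<times> nat"
    obtain j c where p: "p = (j,c)" by fastforce
    have "p \<in> nbhd (prism_vertices n) (prism_adj n) (i,b) \<longleftrightarrow>
      j < n \<and> c < 2 \<and> ((i = j \<and> P2_adj b c) \<or> (b = c \<and> cycle_adj n i j))"
      unfolding p nbhd_def prism_vertices_def prism_adj_def cart_adj_def by auto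
    also have "\<dots> \<longleftrightarrow> j < n \<and> c < 2 \<and> ((i = j \<and> c = 1 - b) \<or>
        (b = c \<and> (j = (i+1) mod n \<or> j = (i+n-1) mod n)))"
    proof -
      have h1: "c < 2 \<Longrightarrow> (P2_adj b c \<longleftrightarrow> c = 1 - b)"
        using assms(2) unfolding P2_adj_def by (auto simp: less_2_cases_iff)
      have h2: "j < n \<Longrightarrow> (cycle_adj n i j \<longleftrightarrow> (j = (i+1) mod n \<or> j = (i+n-1) mod n))"
        using cyc[OF assms(1) _ assms(3), of j] by blast
      show ?thesis using h1 h2 by blast
    qed
    also have "\<dots> \<longleftrightarrow> p \<in> {((i+1) mod n, b), ((i+n-1) mod n, b), (i, 1-b)}"
    proof -
      have "1 - b < 2" by simp
      then show ?thesis unfolding p insert_iff empty_iff prod.inject using m1 assms(1,2)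
        by blast
    qed
    finally show "p \<in> nbhd (prism_vertices n) (prism_adj n) (i,b) \<longleftrightarrow>
       p \<in> {((i+1) mod n, b), ((i+n-1) mod n, b), (i, 1-b)}" .
  qed
qed

lemma wt:
  assumes "i < n" "b < 2" "n \<ge> 3"
  shows "Zm_weight (2*n) (prism_vertices n) (prism_adj n) (\<lambda>(x,y). 2*x+y) (i,b)
     = (6*i+b+1) mod (2*n)"
proof -
  have d1: "((i+1) mod n, b) \<noteq> ((i+n-1) mod n, b)"
    using assms unfolding succ_pred[OF assms(1,3)] by (auto split: if_splits)
  have s: "(\<Sum>y\<in>nbhd (prism_vertices n) (prism_adj n) (i,b). (\<lambda>(x,y). 2*x+y) y)
     = 2*((i+1) mod n) + b + (2*((i+n-1) mod n) + b + (2*i + (1-b)))"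
  proof -
    have d2: "(i, 1-b) \<notin> {((i+1) mod n, b), ((i+n-1) mod n, b)}" using assms by (auto simp: less_2_cases_iff)
    show ?thesis unfolding nb[OF assms] using d1 d2 by (simp add: insert_commute)
  qed
  have e1: "2*((i+1) mod n) = (2*(i+1)) mod (2*n)" by (rule mult_mod_right)
  have e2: "2*((i+n-1) mod n) = (2*(i+n-1)) mod (2*n)" by (rule mult_mod_right)
  have "(2*((i+1) mod n) + b + (2*((i+n-1) mod n) + b + (2*i + (1-b)))) mod (2*n)
      = (2*(i+1) + b + (2*(i+n-1) + b + (2*i + (1-b)))) mod (2*n)"
  proof -
    have c1: "[2*((i+1) mod n) = 2*(i+1)] (mod 2*n)" unfolding cong_def e1 by simp
    have c2: "[2*((i+n-1) mod n) = 2*(i+n-1)] (mod 2*n)" unfolding cong_def e2 by simp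
    have "[2*((i+1) mod n) + b + (2*((i+n-1) mod n) + b + (2*i + (1-b)))
         = 2*(i+1) + b + (2*(i+n-1) + b + (2*i + (1-b)))] (mod 2*n)"
      by (intro cong_add c1 c2 cong_refl)
    then show ?thesis unfolding cong_def .
  qed
  also have "2*(i+1) + b + (2*(i+n-1) + b + (2*i + (1-b))) = (6*i+b+1) + 2*n"
    using assms by auto
  also have "((6*i+b+1) + 2*n) mod (2*n) = (6*i+b+1) mod (2*n)" by (rule mod_add_self2)
  finally show ?thesis unfolding Zm_weight_def s by simp
qed

theorem mainTheorem10:
  fixes n :: nat
  assumes "n \<ge> 4" and "\<not> 3 dvd n"
  shows "Zm_distance_antimagic (2 * n) (prism_vertices n) (prism_adj n)"
proof -
  define f where "f = (\<lambda>(x::nat,y::nat). 2*x+y)"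
  have n3: "n \<ge> 3" using assms by simp
  have cop: "coprime 3 n" using assms(2)
    by (intro prime_imp_coprime) auto
  have bij: "bij_betw f (prism_vertices n) {0..<2*n}"
  proof (rule bij_betw_imageI)
    show "inj_on f (prism_vertices n)"
      unfolding inj_on_def f_def prism_vertices_def by auto presburger
    show "f ` prism_vertices n = {0..<2*n}"
    proof
      show "f ` prism_vertices n \<subseteq> {0..<2*n}"
        unfolding f_def prism_vertices_def by auto
      show "{0..<2*n} \<subseteq> f ` prism_vertices n"
      proof
        fix k assume k: "k \<in> {0..<2*n}"
        have "k = f (k div 2, k mod 2)" unfolding f_def by simp
        moreover have "(k div 2, k mod 2) \<in> prism_vertices n"
          using k unfolding prism_vertices_def by auto
        ultimately show "k \<in> f ` prism_vertices n" by blast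
      qed
    qed
  qed
  have inj: "inj_on (Zm_weight (2*n) (prism_vertices n) (prism_adj n) f) (prism_vertices n)"
  proof (rule inj_onI)
    fix p q assume p: "p \<in> prism_vertices n" and q: "q \<in> prism_vertices n"
      and eq: "Zm_weight (2*n) (prism_vertices n) (prism_adj n) f p
             = Zm_weight (2*n) (prism_vertices n) (prism_adj n) f q"
    obtain i b where pi: "p = (i,b)" "i < n" "b < 2" using p unfolding prism_vertices_def by auto
    obtain j c where qj: "q = (j,c)" "j < n" "c < 2" using q unfolding prism_vertices_def by auto
    have e: "(6*i+b+1) mod (2*n) = (6*j+c+1) mod (2*n)"
      using eq wt[OF pi(2,3) n3] wt[OF qj(2,3) n3] unfolding pi qj f_def by simp
    have "even (6*i+b+1) = even (6*j+c+1)"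
      using arg_cong[OF e, of even] by (simp add: dvd_mod_iff)
    then have bc: "b = c" using pi qj by (auto simp: less_2_cases_iff)
    then have "[6*i+(b+1) = 6*j+(b+1)] (mod 2*n)" using e unfolding cong_def
      by (simp add: add.assoc)
    then have "[6*i = 6*j] (mod 2*n)" using cong_add_rcancel_nat by (metis add_Suc_right add_0_right)
    then have "(2*(3*i)) mod (2*n) = (2*(3*j)) mod (2*n)" unfolding cong_def
      by (simp add: mult.assoc)
    moreover have "(2*(3*i)) mod (2*n) = 2*((3*i) mod n)" "(2*(3*j)) mod (2*n) = 2*((3*j) mod n)"
      by (rule mult_mod_right[symmetric])+
    ultimately have "[3*i = 3*j] (mod n)" unfolding cong_def by simp
    then have "[i = j] (mod n)" using cong_mult_lcancel_nat[OF cop] by simp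
    then have "i = j" using pi qj unfolding cong_def by simp
    then show "p = q" using pi qj bc by simp
  qed
  show ?thesis unfolding Zm_distance_antimagic_def Zm_distance_antimagic_labelling_def
    using bij inj by blast
qed

end
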